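(* Let $F$ be a field of characteristic not $2$, let $a\in F^*$ be a non-square, and let $L=F(\sqrt{a})$. Then $(F^{(4)}\cap L^{(3)})/F$ is a Galois extension.
   Context: All fields are taken inside a fixed quadratic closure $F_q$ of $F$. For a field $K$ of characteristic not $2$, define $K^{(1)}=K$ and, for $n\ge 1$, $K^{(n+1)}$ is the compositum of all quadratic extensions of $K^{(n)}$ which are Galois over $K$. *)

theory Defs
  imports "HOL-Computational_Algebra.Polynomial"
begin

text \<open>All fields are subsets of an ambient field type 'a (the fixed quadratic closure).\<close>

definition qc_subfield :: "'a::field set \<Rightarrow> bool" where
  "qc_subfield K \<longleftrightarrow> 0 \<in> K \<and> 1 \<in> K \<and>
     (\<forall>x\<in>K. \<forall>y\<in>K. x + y \<in> K \<and> x * y \<in> K) \<and>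
     (\<forall>x\<in>K. - x \<in> K) \<and> (\<forall>x\<in>K. x \<noteq> 0 \<longrightarrow> inverse x \<in> K)"

definition qc_gen_field :: "'a::field set \<Rightarrow> 'a set" where
  "qc_gen_field S = \<Inter> {T. qc_subfield T \<and> S \<subseteq> T}"

definition qc_quad_closure :: "'a::field set \<Rightarrow> 'a set" where
  "qc_quad_closure F = \<Inter> {T. qc_subfield T \<and> F \<subseteq> T \<and> (\<forall>x\<in>T. \<forall>y. y * y = x \<longrightarrow> y \<in> T)}"

definition qc_ext_dim :: "'a::field set \<Rightarrow> 'a set \<Rightarrow> nat \<Rightarrow> bool" where
  "qc_ext_dim K M n \<longleftrightarrow> (\<exists>xs. length xs = n \<and> set xs \<subseteq> M \<and>
     (\<forall>c. (\<forall>i<n. c i \<in> K) \<and> (\<Sum>i<n. c i * xs ! i) = 0 \<longrightarrow> (\<forall>i<n. c i = 0)) \<and>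
     M = {\<Sum>i<n. c i * xs ! i | c. \<forall>i<n. c i \<in> K})"

definition qc_quad_ext :: "'a::field set \<Rightarrow> 'a set \<Rightarrow> bool" where
  "qc_quad_ext K M \<longleftrightarrow> qc_subfield M \<and> K \<subseteq> M \<and> qc_ext_dim K M 2"

definition qc_over :: "'a::field set \<Rightarrow> 'a poly \<Rightarrow> bool" where
  "qc_over K p \<longleftrightarrow> (\<forall>i. coeff p i \<in> K)"

definition qc_irreducible_over :: "'a::field set \<Rightarrow> 'a poly \<Rightarrow> bool" where
  "qc_irreducible_over K p \<longleftrightarrow> qc_over K p \<and> degree p \<ge> 1 \<and>
     (\<forall>q r. qc_over K q \<and> qc_over K r \<and> p = q * r \<longrightarrow> degree q = 0 \<or> degree r = 0)"

text \<open>E/K Galois: algebraic, normal and separable, i.e. every element of E is a root of an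
  irreducible polynomial over K which splits into distinct linear factors over E.\<close>
definition qc_galois :: "'a::field set \<Rightarrow> 'a set \<Rightarrow> bool" where
  "qc_galois K E \<longleftrightarrow> qc_subfield K \<and> qc_subfield E \<and> K \<subseteq> E \<and>
     (\<forall>x\<in>E. \<exists>p. qc_irreducible_over K p \<and> poly p x = 0 \<and>
        (\<exists>rs. distinct rs \<and> set rs \<subseteq> E \<and>
              p = smult (lead_coeff p) (\<Prod>r\<leftarrow>rs. [:- r, 1:])))"

definition qc_compositum :: "'a::field set \<Rightarrow> 'a set set \<Rightarrow> 'a set" where
  "qc_compositum K Ms = qc_gen_field (K \<union> \<Union> Ms)"

text \<open>qc_tower K n = K^(n) for n \<ge> 1 (qc_tower K 0 is an unused dummy).\<close>
fun qc_tower :: "'a::field set \<Rightarrow> nat \<Rightarrow> 'a set" where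
  "qc_tower K 0 = K"
| "qc_tower K (Suc 0) = K"
| "qc_tower K (Suc (Suc n)) =
     qc_compositum (qc_tower K (Suc n))
       {M. qc_quad_ext (qc_tower K (Suc n)) M \<and> qc_galois K M}"

end

theory Submission
  imports Defs
begin


lemma sf_0: "qc_subfield K \<Longrightarrow> 0 \<in> K" by (simp add: qc_subfield_def)
lemma sf_1: "qc_subfield K \<Longrightarrow> 1 \<in> K" by (simp add: qc_subfield_def)
lemma sf_add: "qc_subfield K \<Longrightarrow> x \<in> K \<Longrightarrow> y \<in> K \<Longrightarrow> x + y \<in> K" by (simp add: qc_subfield_def)
lemma sf_mult: "qc_subfield K \<Longrightarrow> x \<in> K \<Longrightarrow> y \<in> K \<Longrightarrow> x * y \<in> K" by (simp add: qc_subfield_def)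
lemma sf_neg: "qc_subfield K \<Longrightarrow> x \<in> K \<Longrightarrow> - x \<in> K" by (simp add: qc_subfield_def)
lemma sf_inv: "qc_subfield K \<Longrightarrow> x \<in> K \<Longrightarrow> inverse x \<in> K"
  by (cases "x = 0") (auto simp add: qc_subfield_def)
lemma sf_diff: "qc_subfield K \<Longrightarrow> x \<in> K \<Longrightarrow> y \<in> K \<Longrightarrow> x - y \<in> K"
  by (metis diff_conv_add_uminus sf_add sf_neg)
lemma sf_div: "qc_subfield K \<Longrightarrow> x \<in> K \<Longrightarrow> y \<in> K \<Longrightarrow> x / y \<in> K"
  by (metis divide_inverse sf_inv sf_mult)
lemma sf_UNIV: "qc_subfield (UNIV::'a::field set)" by (simp add: qc_subfield_def)

lemma gen_sf: "qc_subfield (qc_gen_field S)"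
  unfolding qc_gen_field_def qc_subfield_def by blast
lemma gen_sup: "S \<subseteq> qc_gen_field S"
  unfolding qc_gen_field_def by blast
lemma gen_least: "qc_subfield T \<Longrightarrow> S \<subseteq> T \<Longrightarrow> qc_gen_field S \<subseteq> T"
  unfolding qc_gen_field_def by blast

definition hom_on :: "'a::field set \<Rightarrow> ('a \<Rightarrow> 'a) \<Rightarrow> bool" where
  "hom_on D f \<longleftrightarrow> f 1 = 1 \<and> (\<forall>x\<in>D. \<forall>y\<in>D. f (x + y) = f x + f y \<and> f (x * y) = f x * f y)"

lemma hom_add: "hom_on D f \<Longrightarrow> x \<in> D \<Longrightarrow> y \<in> D \<Longrightarrow> f (x + y) = f x + f y"
  by (simp add: hom_on_def)
lemma hom_mult: "hom_on D f \<Longrightarrow> x \<in> D \<Longrightarrow> y \<in> D \<Longrightarrow> f (x * y) = f x * f y"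
  by (simp add: hom_on_def)
lemma hom_1: "hom_on D f \<Longrightarrow> f 1 = 1"
  by (simp add: hom_on_def)
lemma hom_0: "hom_on D f \<Longrightarrow> qc_subfield D \<Longrightarrow> f 0 = 0"
  using hom_add[of D f 0 0] sf_0[of D] by (metis add.right_neutral add_left_cancel)
lemma hom_neg: "hom_on D f \<Longrightarrow> qc_subfield D \<Longrightarrow> x \<in> D \<Longrightarrow> f (- x) = - f x"
  using hom_add[of D f x "-x"] sf_neg[of D x] hom_0[of D f] by (metis neg_eq_iff_add_eq_0 add.right_inverse)
lemma hom_diff: "hom_on D f \<Longrightarrow> qc_subfield D \<Longrightarrow> x \<in> D \<Longrightarrow> y \<in> D \<Longrightarrow> f (x - y) = f x - f y"
  using hom_add[of D f x "-y"] hom_neg[of D f y] sf_neg[of D y] by simp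
lemma hom_inverse: assumes h: "hom_on D f" "qc_subfield D" "x \<in> D" shows "f (inverse x) = inverse (f x)"
proof (cases "x = 0")
  case True
  then show ?thesis using hom_0[OF h(1,2)] by simp
next
  case False
  have "f x * f (inverse x) = 1"
    using hom_mult[OF h(1) h(3) sf_inv[OF h(2) h(3)]] False hom_1[OF h(1)] by simp
  then show ?thesis by (metis inverse_unique)
qed
lemma hom_nz: "hom_on D f \<Longrightarrow> qc_subfield D \<Longrightarrow> x \<in> D \<Longrightarrow> x \<noteq> 0 \<Longrightarrow> f x \<noteq> 0"
proof -
  assume h: "hom_on D f" "qc_subfield D" "x \<in> D" "x \<noteq> 0"
  have "f x * f (inverse x) = 1"
    using hom_mult[OF h(1) h(3) sf_inv[OF h(2) h(3)]] h(4) hom_1[OF h(1)] by simp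
  then show ?thesis by auto
qed
lemma hom_inj: "hom_on D f \<Longrightarrow> qc_subfield D \<Longrightarrow> inj_on f D"
proof (rule inj_onI)
  fix x y assume h: "hom_on D f" "qc_subfield D" "x \<in> D" "y \<in> D" "f x = f y"
  have "f (x - y) = 0" using hom_diff[OF h(1,2,3,4)] h(5) by simp
  then show "x = y" using hom_nz[OF h(1,2) sf_diff[OF h(2,3,4)]] by auto
qed

definition adj :: "'a::field set \<Rightarrow> 'a \<Rightarrow> 'a set" where
  "adj D y = {u + v * y | u v. u \<in> D \<and> v \<in> D}"

lemma adj_unique:
  assumes "qc_subfield D" "y \<notin> D" "u1 \<in> D" "v1 \<in> D" "u2 \<in> D" "v2 \<in> D"
    and "u1 + v1 * y = u2 + v2 * y"
  shows "u1 = u2 \<and> v1 = v2"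
proof (cases "v1 = v2")
  case True then show ?thesis using assms by simp
next
  case False
  have "(v1 - v2) * y = u2 - u1" using assms(7) by (simp add: algebra_simps)
  then have "y = (u2 - u1) / (v1 - v2)" using False by (simp add: field_simps)
  then have "y \<in> D" using assms by (simp add: sf_div sf_diff)
  then show ?thesis using assms by simp
qed

lemma adj_mem: "u \<in> D \<Longrightarrow> v \<in> D \<Longrightarrow> u + v * y \<in> adj D y"
  unfolding adj_def by blast

lemma adj_sub: "qc_subfield D \<Longrightarrow> D \<subseteq> adj D y"
  unfolding adj_def by (force intro: sf_0)
lemma adj_in: "qc_subfield D \<Longrightarrow> y \<in> adj D y"
  unfolding adj_def by (force intro: sf_0 sf_1)

lemma adj_subfield:
  assumes D: "qc_subfield D" and b: "y * y \<in> D" and y: "y \<notin> D"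
  shows "qc_subfield (adj D y)"
proof -
  have z: "0 \<in> adj D y" "1 \<in> adj D y" using adj_sub[OF D] sf_0[OF D] sf_1[OF D] by auto
  have a: "w1 + w2 \<in> adj D y \<and> w1 * w2 \<in> adj D y" if h1: "w1 \<in> adj D y" and h2: "w2 \<in> adj D y" for w1 w2
  proof -
    obtain u1 v1 where 1: "u1 \<in> D" "v1 \<in> D" "w1 = u1 + v1 * y" using h1 unfolding adj_def by blast
    obtain u2 v2 where 2: "u2 \<in> D" "v2 \<in> D" "w2 = u2 + v2 * y" using h2 unfolding adj_def by blast
    have "w1 + w2 = (u1 + u2) + (v1 + v2) * y" using 1 2 by (simp add: algebra_simps)
    moreover have "w1 * w2 = (u1 * u2 + v1 * v2 * (y * y)) + (u1 * v2 + u2 * v1) * y"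
      using 1 2 by (simp add: algebra_simps)
    moreover have "(u1 + u2) + (v1 + v2) * y \<in> adj D y"
      by (rule adj_mem) (simp_all add: sf_add D 1 2)
    moreover have "(u1 * u2 + v1 * v2 * (y * y)) + (u1 * v2 + u2 * v1) * y \<in> adj D y"
      by (rule adj_mem) (simp_all add: sf_add sf_mult D b 1 2)
    ultimately show ?thesis by simp
  qed
  have n: "- w \<in> adj D y" if h1: "w \<in> adj D y" for w
  proof -
    obtain u v where 1: "u \<in> D" "v \<in> D" "w = u + v * y" using h1 unfolding adj_def by blast
    have "- w = (- u) + (- v) * y" using 1 by simp
    moreover have "(- u) + (- v) * y \<in> adj D y"
      by (rule adj_mem) (simp_all add: sf_neg D 1)
    ultimately show ?thesis by simp
  qed
  have i: "inverse w \<in> adj D y" if h1: "w \<in> adj D y" and h2: "w \<noteq> 0" for w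
  proof -
    obtain u v where 1: "u \<in> D" "v \<in> D" "w = u + v * y" using h1 unfolding adj_def by blast
    define d where "d = u * u - v * v * (y * y)"
    have dD: "d \<in> D" unfolding d_def using 1 D b by (simp add: sf_diff sf_mult)
    have dnz: "d \<noteq> 0"
    proof
      assume d0: "d = 0"
      show False
      proof (cases "v = 0")
        case True
        then have "u = 0" using d0 unfolding d_def by simp
        then show False using True 1 h2 by simp
      next
        case False
        have "(y - u / v) * (y + u / v) = 0" using d0 False unfolding d_def
          by (simp add: field_simps power2_eq_square)
        then have "y = u / v \<or> y = - (u / v)" by (simp add: eq_neg_iff_add_eq_0)
        then have "y \<in> D" using 1 D by (auto intro: sf_div sf_neg)
        then show False using y by simp
      qed
    qed
    have "w * ((u - v * y) / d) = 1" using dnz 1 unfolding d_def by (simp add: field_simps)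
    then have "inverse w = (u - v * y) / d" by (rule inverse_unique)
    also have "\<dots> = u / d + (- v / d) * y" using dnz by (simp add: field_simps)
    finally have "inverse w = u / d + (- v / d) * y" .
    moreover have "u / d + (- v / d) * y \<in> adj D y"
      by (rule adj_mem) (simp_all add: sf_neg sf_div D 1 dD)
    ultimately show ?thesis by simp
  qed
  show ?thesis unfolding qc_subfield_def using z a n i by blast
qed

lemma adj_ext:
  assumes D: "qc_subfield D" and h: "hom_on D f" and b: "y * y \<in> D" and y: "y \<notin> D"
    and c: "c * c = f (y * y)"
  shows "\<exists>g. hom_on (adj D y) g \<and> (\<forall>x\<in>D. g x = f x) \<and> g y = c"
proof -
  define cu where "cu w = (SOME u. u \<in> D \<and> (\<exists>v\<in>D. w = u + v * y))" for w
  define cv where "cv w = (SOME v. v \<in> D \<and> (\<exists>u\<in>D. w = u + v * y))" for w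
  define g where "g w = f (cu w) + f (cv w) * c" for w
  have geq: "g (u + v * y) = f u + f v * c" if "u \<in> D" "v \<in> D" for u v
  proof -
    have "cu (u + v * y) \<in> D \<and> (\<exists>v'\<in>D. u + v * y = cu (u + v * y) + v' * y)"
      unfolding cu_def by (rule someI) (use that in blast)
    then have "cu (u + v * y) = u" using adj_unique[OF D y] that by metis
    moreover have "cv (u + v * y) \<in> D \<and> (\<exists>u'\<in>D. u + v * y = u' + cv (u + v * y) * y)"
      unfolding cv_def by (rule someI) (use that in blast)
    then have "cv (u + v * y) = v" using adj_unique[OF D y] that by metis
    ultimately show ?thesis unfolding g_def by simp
  qed
  have f0: "f 0 = 0" using hom_0[OF h D] .
  have gD: "g x = f x" if "x \<in> D" for x using geq[OF that sf_0[OF D]] f0 by simp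
  have gy: "g y = c" using geq[OF sf_0[OF D] sf_1[OF D]] f0 hom_1[OF h] by simp
  have hom: "hom_on (adj D y) g"
    unfolding hom_on_def
  proof (intro conjI ballI)
    show "g 1 = 1" using gD[OF sf_1[OF D]] hom_1[OF h] by simp
  next
    fix w1 w2 assume "w1 \<in> adj D y" "w2 \<in> adj D y"
    then obtain u1 v1 u2 v2 where 1: "u1 \<in> D" "v1 \<in> D" "w1 = u1 + v1 * y"
      and 2: "u2 \<in> D" "v2 \<in> D" "w2 = u2 + v2 * y" unfolding adj_def by blast
    have "w1 + w2 = (u1 + u2) + (v1 + v2) * y" using 1 2 by (simp add: algebra_simps)
    then have "g (w1 + w2) = g ((u1 + u2) + (v1 + v2) * y)" by simp
    also have "\<dots> = f (u1 + u2) + f (v1 + v2) * c"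
      by (rule geq) (simp_all add: sf_add D 1 2)
    finally have "g (w1 + w2) = f (u1 + u2) + f (v1 + v2) * c" .
    then show "g (w1 + w2) = g w1 + g w2"
      using 1 2 geq hom_add[OF h] by (simp add: algebra_simps)
    have "w1 * w2 = (u1 * u2 + v1 * v2 * (y * y)) + (u1 * v2 + u2 * v1) * y"
      using 1 2 by (simp add: algebra_simps)
    moreover have "g ((u1 * u2 + v1 * v2 * (y * y)) + (u1 * v2 + u2 * v1) * y)
       = f u1 * f u2 + f v1 * f v2 * (c * c) + (f u1 * f v2 + f u2 * f v1) * c"
      using 1 2 D b geq[of "u1 * u2 + v1 * v2 * (y * y)" "u1 * v2 + u2 * v1"] c
      by (simp add: sf_add sf_mult hom_add[OF h] hom_mult[OF h])
    ultimately show "g (w1 * w2) = g w1 * g w2"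
      using 1 2 geq by (simp add: algebra_simps)
  qed
  show ?thesis using hom gD gy by blast
qed



lemma quad_closure_sub:
  assumes "qc_quad_closure F = UNIV" "qc_subfield T" "F \<subseteq> T" "\<forall>x\<in>T. \<forall>y. y * y = x \<longrightarrow> y \<in> T"
  shows "T = UNIV"
proof -
  have "qc_quad_closure F \<subseteq> T" unfolding qc_quad_closure_def
    by (rule Inter_lower) (use assms(2-4) in simp)
  then show ?thesis using assms(1) by auto
qed

lemma chain_two:
  assumes "subset.chain A C" "X \<in> C" "Y \<in> C"
  shows "\<exists>Z\<in>C. X \<subseteq> Z \<and> Y \<subseteq> Z"
proof -
  have "X \<subseteq> Y \<or> Y \<subseteq> X" using assms unfolding subset_chain_def by blast
  then show ?thesis using assms(2,3) by blast
qed

lemma max_subfield: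
  assumes F: "qc_subfield F" and z: "z \<notin> F"
  shows "\<exists>K. qc_subfield K \<and> F \<subseteq> K \<and> z \<notin> K \<and>
     (\<forall>K'. qc_subfield K' \<and> K \<subseteq> K' \<and> z \<notin> K' \<longrightarrow> K' = K)"
proof -
  let ?A = "{K. qc_subfield K \<and> F \<subseteq> K \<and> z \<notin> K}"
  have "\<exists>M\<in>?A. \<forall>X\<in>?A. M \<subseteq> X \<longrightarrow> X = M"
  proof (rule subset_Zorn_nonempty)
    show "?A \<noteq> {}" using F z by auto
  next
    fix C assume C: "C \<noteq> {}" "subset.chain ?A C"
    have CA: "C \<subseteq> ?A" using C(2) unfolding subset_chain_def by blast
    have CS: "qc_subfield Z" if "Z \<in> C" for Z using CA that by blast
    have two: "\<exists>Z\<in>C. x \<in> Z \<and> y \<in> Z" if hh: "x \<in> \<Union>C" "y \<in> \<Union>C" for x y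
    proof -
      obtain X Y where XY: "X \<in> C" "Y \<in> C" "x \<in> X" "y \<in> Y" using hh by blast
      obtain Z where "Z \<in> C" "X \<subseteq> Z" "Y \<subseteq> Z" using chain_two[OF C(2) XY(1,2)] by blast
      then show ?thesis using XY by blast
    qed
    have sf: "qc_subfield (\<Union>C)"
      unfolding qc_subfield_def
    proof (intro conjI ballI impI)
      obtain X where X: "X \<in> C" using C(1) by blast
      show "0 \<in> \<Union>C" using X CS[OF X] sf_0 by blast
      show "1 \<in> \<Union>C" using X CS[OF X] sf_1 by blast
    next
      fix x y assume "x \<in> \<Union>C" "y \<in> \<Union>C"
      then obtain Z where Z: "Z \<in> C" "x \<in> Z" "y \<in> Z" using two by blast
      show "x + y \<in> \<Union>C" using Z sf_add[OF CS[OF Z(1)]] by blast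
      show "x * y \<in> \<Union>C" using Z sf_mult[OF CS[OF Z(1)]] by blast
    next
      fix x assume "x \<in> \<Union>C"
      then obtain Z where Z: "Z \<in> C" "x \<in> Z" by blast
      show "- x \<in> \<Union>C" using Z sf_neg[OF CS[OF Z(1)]] by blast
      show "inverse x \<in> \<Union>C" using Z sf_inv[OF CS[OF Z(1)]] by blast
    qed
    obtain X where X: "X \<in> C" using C(1) by blast
    have "F \<subseteq> \<Union>C" using X CA by auto
    moreover have "z \<notin> \<Union>C" using CA by auto
    ultimately show "\<Union>C \<in> ?A" using sf by simp
  qed
  then obtain K where K: "K \<in> ?A" "\<forall>X\<in>?A. K \<subseteq> X \<longrightarrow> X = K" by blast
  show ?thesis by (rule exI[of _ K]) (use K in auto)
qed

definition graph :: "'a set \<Rightarrow> ('a \<Rightarrow> 'a) \<Rightarrow> ('a \<times> 'a) set" where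
  "graph D f = {(x, f x) | x. x \<in> D}"

lemma graph_mem: "(x, y) \<in> graph D f \<longleftrightarrow> x \<in> D \<and> y = f x"
  unfolding graph_def by blast

lemma ext_all:
  fixes D0 :: "'a::field set"
  assumes D0: "qc_subfield D0" and h0: "hom_on D0 f0" and FD: "F \<subseteq> D0"
    and sq: "\<forall>x::'a. \<exists>y. y * y = x" and qc: "qc_quad_closure F = UNIV"
  shows "\<exists>f. hom_on UNIV f \<and> (\<forall>x\<in>D0. f x = f0 x)"
proof -
  let ?A = "{R. \<exists>D f. R = graph D f \<and> qc_subfield D \<and> D0 \<subseteq> D \<and> hom_on D f \<and> (\<forall>x\<in>D0. f x = f0 x)}"
  have "\<exists>M\<in>?A. \<forall>X\<in>?A. M \<subseteq> X \<longrightarrow> X = M"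
  proof (rule subset_Zorn_nonempty)
    show "?A \<noteq> {}" using D0 h0 by auto
  next
    fix C assume C: "C \<noteq> {}" "subset.chain ?A C"
    have CA: "C \<subseteq> ?A" using C(2) unfolding subset_chain_def by blast
    let ?U = "\<Union>C"
    have fnl: "y1 = y2" if hh: "(x, y1) \<in> ?U" "(x, y2) \<in> ?U" for x y1 y2
    proof -
      obtain X Y where XY: "X \<in> C" "Y \<in> C" "(x, y1) \<in> X" "(x, y2) \<in> Y" using hh by blast
      obtain Z where Z0: "Z \<in> C" "X \<subseteq> Z" "Y \<subseteq> Z" using chain_two[OF C(2) XY(1,2)] by blast
      have Z: "Z \<in> C" "(x, y1) \<in> Z" "(x, y2) \<in> Z" using Z0 XY by blast+
      have "Z \<in> ?A" using CA Z(1) by (rule subsetD)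
      then obtain D f where "Z = graph D f" by auto
      then show ?thesis using Z graph_mem by metis
    qed
    define D where "D = Domain ?U"
    define f where "f x = (SOME y. (x, y) \<in> ?U)" for x
    have fx: "f x = y" if "(x, y) \<in> ?U" for x y
      unfolding f_def by (rule some_equality) (use that fnl in auto)
    have Ueq: "?U = graph D f"
    proof
      show "?U \<subseteq> graph D f"
      proof
        fix p assume p: "p \<in> ?U"
        obtain x y where xy: "p = (x, y)" by (cases p)
        have pu: "(x, y) \<in> ?U" using p xy by simp
        have "x \<in> D" unfolding D_def using pu by (rule DomainI)
        moreover have "y = f x" using fx[OF pu] by simp
        ultimately show "p \<in> graph D f" unfolding xy graph_mem by simp
      qed
      show "graph D f \<subseteq> ?U"
      proof
        fix p assume "p \<in> graph D f"
        then obtain x where x: "x \<in> D" "p = (x, f x)" unfolding graph_def by blast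
        then obtain y where y: "(x, y) \<in> ?U" unfolding D_def by (meson DomainE)
        then have "y = f x" using fx[OF y] by simp
        then show "p \<in> ?U" using y x by simp
      qed
    qed
    have mem: "\<exists>Dz fz. Z = graph Dz fz \<and> qc_subfield Dz \<and> D0 \<subseteq> Dz \<and> hom_on Dz fz \<and> (\<forall>x\<in>D0. fz x = f0 x)
        \<and> Dz \<subseteq> D \<and> (\<forall>x\<in>Dz. f x = fz x)" if hh: "Z \<in> C" for Z
    proof -
      have "Z \<in> ?A" using CA hh by (rule subsetD)
      then obtain Dz fz where Z: "Z = graph Dz fz" "qc_subfield Dz" "D0 \<subseteq> Dz" "hom_on Dz fz" "\<forall>x\<in>D0. fz x = f0 x"
        by auto
      have inU: "(x, fz x) \<in> ?U" if "x \<in> Dz" for x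
      proof -
        have "(x, fz x) \<in> Z" using Z(1) that by (simp add: graph_mem)
        then show ?thesis using hh by (rule UnionI[rotated])
      qed
      have "Dz \<subseteq> D" unfolding D_def using inU by (meson DomainI subsetI)
      moreover have "\<forall>x\<in>Dz. f x = fz x" using inU fx by blast
      ultimately show ?thesis apply (rule_tac exI[of _ Dz], rule_tac exI[of _ fz]) using Z by simp
    qed
    have two: "\<exists>Dz fz. qc_subfield Dz \<and> D0 \<subseteq> Dz \<and> hom_on Dz fz \<and> (\<forall>x\<in>D0. fz x = f0 x)
        \<and> Dz \<subseteq> D \<and> (\<forall>x\<in>Dz. f x = fz x) \<and> x \<in> Dz \<and> y \<in> Dz" if hh: "x \<in> D" "y \<in> D" for x y
    proof -
      obtain X Y where XY: "X \<in> C" "Y \<in> C" "x \<in> Domain X" "y \<in> Domain Y" using hh unfolding D_def by blast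
      obtain Z where Z: "Z \<in> C" "X \<subseteq> Z" "Y \<subseteq> Z" using chain_two[OF C(2) XY(1,2)] by blast
      have "x \<in> Domain Z" "y \<in> Domain Z" using XY Z by blast+
      moreover obtain Dz fz where "Z = graph Dz fz \<and> qc_subfield Dz \<and> D0 \<subseteq> Dz \<and> hom_on Dz fz \<and> (\<forall>x\<in>D0. fz x = f0 x)
        \<and> Dz \<subseteq> D \<and> (\<forall>x\<in>Dz. f x = fz x)" using mem[OF Z(1)] by blast
      moreover have "Domain (graph Dz fz) = Dz" unfolding graph_def by auto
      ultimately show ?thesis by metis
    qed
    obtain Z0 where Z0: "Z0 \<in> C" using C(1) by blast
    obtain D1 f1 where Z1: "qc_subfield D1" "D0 \<subseteq> D1" "hom_on D1 f1" "\<forall>x\<in>D0. f1 x = f0 x"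
        "D1 \<subseteq> D" "\<forall>x\<in>D1. f x = f1 x" using mem[OF Z0] by blast
    have D0D: "D0 \<subseteq> D" using Z1 by blast
    have ff0: "\<forall>x\<in>D0. f x = f0 x" using Z1 by auto
    have sfD: "qc_subfield D"
      unfolding qc_subfield_def
    proof (intro conjI ballI impI)
      show "0 \<in> D" "1 \<in> D" using D0D sf_0[OF D0] sf_1[OF D0] by auto
    next
      fix x y assume "x \<in> D" "y \<in> D"
      then obtain Dz where "qc_subfield Dz" "Dz \<subseteq> D" "x \<in> Dz" "y \<in> Dz" using two by blast
      then show "x + y \<in> D" "x * y \<in> D" using sf_add sf_mult by blast+
    next
      fix x assume "x \<in> D"
      then obtain Dz where "qc_subfield Dz" "Dz \<subseteq> D" "x \<in> Dz" using two by blast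
      then show "- x \<in> D" "inverse x \<in> D" using sf_neg sf_inv by blast+
    qed
    have homD: "hom_on D f"
      unfolding hom_on_def
    proof (intro conjI ballI)
      show "f 1 = 1" using ff0 hom_1[OF h0] sf_1[OF D0] by auto
    next
      fix x y assume "x \<in> D" "y \<in> D"
      then obtain Dz fz where z: "qc_subfield Dz" "hom_on Dz fz" "Dz \<subseteq> D" "\<forall>x\<in>Dz. f x = fz x"
        "x \<in> Dz" "y \<in> Dz" using two by blast
      show "f (x + y) = f x + f y" using z sf_add[OF z(1)] hom_add[OF z(2)] by simp
      show "f (x * y) = f x * f y" using z sf_mult[OF z(1)] hom_mult[OF z(2)] by simp
    qed
    show "?U \<in> ?A" using Ueq sfD D0D homD ff0 by blast
  qed
  then obtain MM where MM: "MM \<in> ?A" "\<forall>X\<in>?A. MM \<subseteq> X \<longrightarrow> X = MM" by blast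
  from MM(1) obtain D f where M: "MM = graph D f" "qc_subfield D" "D0 \<subseteq> D" "hom_on D f" "\<forall>x\<in>D0. f x = f0 x"
    by blast
  have max: "\<forall>X\<in>?A. graph D f \<subseteq> X \<longrightarrow> X = graph D f" using MM(2) M(1) by simp
  note M = M(2-5)
  have closed: "\<forall>x\<in>D. \<forall>y. y * y = x \<longrightarrow> y \<in> D"
  proof (rule ccontr)
    assume "\<not> ?thesis"
    then obtain y where y: "y * y \<in> D" "y \<notin> D" by blast
    obtain c where c: "c * c = f (y * y)" using sq by blast
    obtain g where g: "hom_on (adj D y) g" "\<forall>x\<in>D. g x = f x" "g y = c"
      using adj_ext[OF M(1) M(3) y c] by blast
    have sfa: "qc_subfield (adj D y)" using adj_subfield[OF M(1) y] .
    have DA: "D \<subseteq> adj D y" using adj_sub[OF M(1)] .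
    have "graph (adj D y) g \<in> ?A" unfolding mem_Collect_eq
      apply (rule exI[of _ "adj D y"], rule exI[of _ g]) using sfa DA M(2) g M(4) by auto
    moreover have "graph D f \<subseteq> graph (adj D y) g"
    proof
      fix p assume "p \<in> graph D f"
      then obtain x where "x \<in> D" "p = (x, f x)" unfolding graph_def by blast
      then show "p \<in> graph (adj D y) g" using DA g(2) by (auto simp: graph_mem)
    qed
    ultimately have eq: "graph (adj D y) g = graph D f" using max by blast
    have "(y, g y) \<in> graph (adj D y) g" using adj_in[OF M(1)] by (simp add: graph_mem)
    then have "(y, g y) \<in> graph D f" using eq by simp
    then show False using y(2) by (simp add: graph_mem)
  qed
  have "D = UNIV" using quad_closure_sub[OF qc M(1) _ closed] FD M(2) by blast
  then show ?thesis using M by blast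
qed



definition aut :: "('a::field \<Rightarrow> 'a) \<Rightarrow> bool" where
  "aut s \<longleftrightarrow> bij s \<and> hom_on UNIV s"

lemma sq_eq: "(a::'a::field) * a = b * b \<Longrightarrow> a = b \<or> a = - b"
proof -
  assume "a * a = b * b"
  then have "(a - b) * (a + b) = 0" by (simp add: algebra_simps)
  then show ?thesis by (auto simp: eq_neg_iff_add_eq_0)
qed

lemma aut_add: "aut s \<Longrightarrow> s (x + y) = s x + s y" unfolding aut_def hom_on_def by blast
lemma aut_mult: "aut s \<Longrightarrow> s (x * y) = s x * s y" unfolding aut_def hom_on_def by blast
lemma aut_hom: "aut s \<Longrightarrow> hom_on UNIV s" unfolding aut_def by blast
lemma aut_1: "aut s \<Longrightarrow> s 1 = 1" unfolding aut_def hom_on_def by blast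
lemma aut_0: "aut s \<Longrightarrow> s 0 = 0" using hom_0[OF aut_hom sf_UNIV] .
lemma aut_neg: "aut s \<Longrightarrow> s (- x) = - s x" using hom_neg[OF aut_hom sf_UNIV] by simp
lemma aut_diff: "aut s \<Longrightarrow> s (x - y) = s x - s y" using hom_diff[OF aut_hom sf_UNIV] by simp
lemma aut_inverse: "aut s \<Longrightarrow> s (inverse x) = inverse (s x)" using hom_inverse[OF aut_hom sf_UNIV] by simp
lemma aut_divide: "aut s \<Longrightarrow> s (x / y) = s x / s y"
  by (simp add: divide_inverse aut_mult aut_inverse)
lemma aut_inj: "aut s \<Longrightarrow> inj s" unfolding aut_def bij_def by blast
lemma aut_surj: "aut s \<Longrightarrow> surj s" unfolding aut_def bij_def by blast
lemma aut_eq0: "aut s \<Longrightarrow> s x = 0 \<longleftrightarrow> x = 0"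
  by (metis aut_0 aut_inj injD)
lemma aut_inv_f: "aut s \<Longrightarrow> inv s (s x) = x" using aut_inj by (metis inv_f_f)
lemma aut_f_inv: "aut s \<Longrightarrow> s (inv s x) = x" using aut_surj by (metis surj_f_inv_f)

lemma aut_inv: assumes "aut s" shows "aut (inv s)"
proof -
  have "bij (inv s)" using assms unfolding aut_def by (simp add: bij_imp_bij_inv)
  moreover have "hom_on UNIV (inv s)" unfolding hom_on_def
  proof (intro conjI ballI)
    show "inv s 1 = 1" using aut_inv_f[OF assms, of 1] aut_1[OF assms] by simp
    fix x y :: 'a
    have "s (inv s x + inv s y) = x + y" using assms by (simp add: aut_add aut_f_inv)
    then show "inv s (x + y) = inv s x + inv s y" using aut_inv_f[OF assms] by metis
    have "s (inv s x * inv s y) = x * y" using assms by (simp add: aut_mult aut_f_inv)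
    then show "inv s (x * y) = inv s x * inv s y" using aut_inv_f[OF assms] by metis
  qed
  ultimately show ?thesis unfolding aut_def by blast
qed

lemma aut_comp: assumes "aut s" "aut t" shows "aut (s \<circ> t)"
  using assms unfolding aut_def hom_on_def by (auto intro: bij_comp)

lemma aut_id: "aut id" unfolding aut_def hom_on_def by simp

lemma hom_surj:
  fixes s :: "'a::field \<Rightarrow> 'a"
  assumes h: "hom_on UNIV s" and fixF: "\<forall>x\<in>F. s x = x"
    and sq: "\<forall>x::'a::field. \<exists>y. y * y = x" and qc: "qc_quad_closure F = UNIV"
  shows "surj s"
proof -
  have sfR: "qc_subfield (range s)"
    unfolding qc_subfield_def
  proof (intro conjI ballI impI)
    show "0 \<in> range s" using hom_0[OF h sf_UNIV] by (metis rangeI)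
    show "1 \<in> range s" using hom_1[OF h] by (metis rangeI)
  next
    fix x y assume "x \<in> range s" "y \<in> range s"
    then obtain a b where "x = s a" "y = s b" by blast
    then show "x + y \<in> range s" "x * y \<in> range s"
      using hom_add[OF h] hom_mult[OF h] by (metis UNIV_I rangeI)+
  next
    fix x assume "x \<in> range s"
    then obtain a where "x = s a" by blast
    then show "- x \<in> range s" "inverse x \<in> range s"
      using hom_neg[OF h sf_UNIV] hom_inverse[OF h sf_UNIV] by (metis UNIV_I rangeI)+
  qed
  have FR: "F \<subseteq> range s" using fixF by (metis rangeI subsetI)
  have cl: "\<forall>x\<in>range s. \<forall>y. y * y = x \<longrightarrow> y \<in> range s"
  proof (intro ballI allI impI)
    fix x y assume "x \<in> range s" "y * y = x"
    then obtain a where a: "x = s a" by blast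
    obtain t where t: "t * t = a" using sq by blast
    have "s t * s t = s (t * t)" using hom_mult[OF h] by simp
    then have "s t * s t = y * y" using a t \<open>y * y = x\<close> by simp
    then have "y = s t \<or> y = - s t" using sq_eq by metis
    then show "y \<in> range s" using hom_neg[OF h sf_UNIV] by (metis UNIV_I rangeI)
  qed
  show ?thesis using quad_closure_sub[OF qc sfR FR cl] .
qed

lemma fix_lemma:
  fixes F :: "'a::field set"
  assumes F: "qc_subfield F" and two: "(2::'a::field) \<noteq> 0"
    and sq: "\<forall>x::'a. \<exists>y. y * y = x" and qc: "qc_quad_closure F = UNIV" and z: "z \<notin> F"
  shows "\<exists>s. aut s \<and> (\<forall>x\<in>F. s x = x) \<and> s z \<noteq> z"
proof -
  obtain K where K: "qc_subfield K" "F \<subseteq> K" "z \<notin> K"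
    and maxK: "\<forall>K'. qc_subfield K' \<and> K \<subseteq> K' \<and> z \<notin> K' \<longrightarrow> K' = K"
    using max_subfield[OF F z] by blast
  have "\<not> (\<forall>x\<in>K. \<forall>y. y * y = x \<longrightarrow> y \<in> K)"
  proof
    assume "\<forall>x\<in>K. \<forall>y. y * y = x \<longrightarrow> y \<in> K"
    then have "K = UNIV" using quad_closure_sub[OF qc K(1) K(2)] by blast
    then show False using K(3) by simp
  qed
  then obtain y where y: "y * y \<in> K" "y \<notin> K" by blast
  have sfa: "qc_subfield (adj K y)" using adj_subfield[OF K(1) y] .
  have KA: "K \<subseteq> adj K y" using adj_sub[OF K(1)] .
  have yA: "y \<in> adj K y" using adj_in[OF K(1)] .
  have "z \<in> adj K y"
  proof (rule ccontr)
    assume "z \<notin> adj K y"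
    then have "adj K y = K" using maxK sfa KA by blast
    then show False using yA y(2) by simp
  qed
  then obtain u v where uv: "u \<in> K" "v \<in> K" "z = u + v * y" unfolding adj_def by blast
  have v0: "v \<noteq> 0" using uv K(3) by auto
  have hid: "hom_on K id" unfolding hom_on_def by simp
  have c: "(- y) * (- y) = id (y * y)" by simp
  obtain g where g: "hom_on (adj K y) g" "\<forall>x\<in>K. g x = id x" "g y = - y"
    using adj_ext[OF K(1) hid y c] by blast
  obtain s where s: "hom_on UNIV s" "\<forall>x\<in>adj K y. s x = g x"
    using ext_all[OF sfa g(1) _ sq qc] K(2) KA by blast
  have fixF: "\<forall>x\<in>F. s x = x"
  proof
    fix x assume "x \<in> F"
    then have "x \<in> K" "x \<in> adj K y" using K(2) KA by auto
    then show "s x = x" using s(2) g(2) by simp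
  qed
  have "s z = g u + g v * g y"
    using s(2) uv \<open>z \<in> adj K y\<close> hom_add[OF g(1)] hom_mult[OF g(1)] KA yA sf_mult[OF sfa]
    by (metis subsetD)
  then have sz: "s z = u - v * y" using g(2) g(3) uv by simp
  have "s z \<noteq> z"
  proof
    assume "s z = z"
    then have "u - v * y = u + v * y" using sz uv by simp
    then have "2 * (v * y) = 0" by (simp add: algebra_simps)
    moreover have "y \<noteq> 0" using y(2) sf_0[OF K(1)] by auto
    ultimately show False using two v0 by simp
  qed
  moreover have "aut s"
    unfolding aut_def bij_def
    using hom_inj[OF s(1) sf_UNIV] hom_surj[OF s(1) fixF sq qc] s(1) by simp
  ultimately show ?thesis using fixF by blast
qed



lemma aut_img_inv: "aut s \<Longrightarrow> s ` inv s ` X = X"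
  by (simp add: image_image aut_f_inv)
lemma aut_inv_img: "aut s \<Longrightarrow> inv s ` s ` X = X"
  by (simp add: image_image aut_inv_f)

lemma img_sf: assumes s: "aut s" and K: "qc_subfield K" shows "qc_subfield (s ` K)"
  unfolding qc_subfield_def
proof (intro conjI ballI impI)
  show "0 \<in> s ` K" using aut_0[OF s] sf_0[OF K] by (metis image_eqI)
  show "1 \<in> s ` K" using aut_1[OF s] sf_1[OF K] by (metis image_eqI)
next
  fix x y assume "x \<in> s ` K" "y \<in> s ` K"
  then obtain a b where ab: "a \<in> K" "b \<in> K" "x = s a" "y = s b" by blast
  show "x + y \<in> s ` K" using ab aut_add[OF s] sf_add[OF K] by (metis image_eqI)
  show "x * y \<in> s ` K" using ab aut_mult[OF s] sf_mult[OF K] by (metis image_eqI)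
next
  fix x assume "x \<in> s ` K"
  then obtain a where a: "a \<in> K" "x = s a" by blast
  show "- x \<in> s ` K" using a aut_neg[OF s] sf_neg[OF K] by (metis image_eqI)
  show "inverse x \<in> s ` K" using a aut_inverse[OF s] sf_inv[OF K] by (metis image_eqI)
qed

lemma img_gen_sub: assumes s: "aut s" shows "s ` qc_gen_field S \<subseteq> qc_gen_field (s ` S)"
proof -
  let ?T = "inv s ` qc_gen_field (s ` S)"
  have "qc_subfield ?T" using img_sf[OF aut_inv[OF s] gen_sf] .
  moreover have "S \<subseteq> ?T"
  proof
    fix x assume "x \<in> S"
    then have "s x \<in> qc_gen_field (s ` S)" using gen_sup by blast
    then show "x \<in> ?T" using aut_inv_f[OF s] by (metis image_eqI)
  qed
  ultimately have "qc_gen_field S \<subseteq> ?T" by (rule gen_least)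
  then have "s ` qc_gen_field S \<subseteq> s ` ?T" by (rule image_mono)
  then show ?thesis using aut_img_inv[OF s] by simp
qed

lemma img_gen: assumes s: "aut s" shows "s ` qc_gen_field S = qc_gen_field (s ` S)"
proof
  show "s ` qc_gen_field S \<subseteq> qc_gen_field (s ` S)" by (rule img_gen_sub[OF s])
  have "inv s ` qc_gen_field (s ` S) \<subseteq> qc_gen_field (inv s ` s ` S)"
    by (rule img_gen_sub[OF aut_inv[OF s]])
  then have "inv s ` qc_gen_field (s ` S) \<subseteq> qc_gen_field S" using aut_inv_img[OF s] by simp
  then have "s ` inv s ` qc_gen_field (s ` S) \<subseteq> s ` qc_gen_field S" by (rule image_mono)
  then show "qc_gen_field (s ` S) \<subseteq> s ` qc_gen_field S" using aut_img_inv[OF s] by simp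
qed

lemma aut_sum: assumes s: "aut s" shows "s (\<Sum>i\<in>A. f i) = (\<Sum>i\<in>A. s (f i))"
proof (cases "finite A")
  case True then show ?thesis
    by (induction A rule: finite_induct) (simp_all add: aut_0[OF s] aut_add[OF s])
next
  case False then show ?thesis by (simp add: aut_0[OF s])
qed

lemma ext_dim_img:
  assumes s: "aut s" and d: "qc_ext_dim K M n"
  shows "qc_ext_dim (s ` K) (s ` M) n"
proof -
  obtain xs where H: "length xs = n \<and> set xs \<subseteq> M \<and>
     (\<forall>c. (\<forall>i<n. c i \<in> K) \<and> (\<Sum>i<n. c i * xs ! i) = 0 \<longrightarrow> (\<forall>i<n. c i = 0)) \<and>
     M = {\<Sum>i<n. c i * xs ! i | c. \<forall>i<n. c i \<in> K}"
    using d unfolding qc_ext_dim_def by (elim exE)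
  note xs = H[THEN conjunct1] H[THEN conjunct2, THEN conjunct1]
  note ind = H[THEN conjunct2, THEN conjunct2, THEN conjunct1]
  note sp = H[THEN conjunct2, THEN conjunct2, THEN conjunct2]
  let ?ys = "map s xs"
  have ys: "length ?ys = n" "set ?ys \<subseteq> s ` M" using xs by auto
  have ysn: "?ys ! i = s (xs ! i)" if "i < n" for i using that xs(1) by simp
  have sw: "(\<Sum>i<n. d i * s (xs ! i)) = (\<Sum>i<n. d i * ?ys ! i)" for d
    by (rule sum.cong) (simp_all add: ysn)
  have key: "s (\<Sum>i<n. inv s (c' i) * xs ! i) = (\<Sum>i<n. c' i * ?ys ! i)" for c'
  proof -
    have "s (\<Sum>i<n. inv s (c' i) * xs ! i) = (\<Sum>i<n. s (inv s (c' i) * xs ! i))" by (rule aut_sum[OF s])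
    also have "\<dots> = (\<Sum>i<n. c' i * s (xs ! i))" by (simp add: aut_mult[OF s] aut_f_inv[OF s])
    also have "\<dots> = (\<Sum>i<n. c' i * ?ys ! i)" by (rule sw)
    finally show ?thesis .
  qed
  have ind': "\<forall>c'. (\<forall>i<n. c' i \<in> s ` K) \<and> (\<Sum>i<n. c' i * ?ys ! i) = 0 \<longrightarrow> (\<forall>i<n. c' i = 0)"
  proof (rule allI, rule impI)
    fix c' assume h: "(\<forall>i<n. c' i \<in> s ` K) \<and> (\<Sum>i<n. c' i * ?ys ! i) = 0"
    have cK: "\<forall>i<n. inv s (c' i) \<in> K"
    proof (intro allI impI)
      fix i assume "i < n"
      then have "c' i \<in> s ` K" using h by simp
      then obtain k where "k \<in> K" "c' i = s k" by blast
      then show "inv s (c' i) \<in> K" using aut_inv_f[OF s] by simp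
    qed
    have "s (\<Sum>i<n. inv s (c' i) * xs ! i) = 0" using key h by simp
    then have sum0: "(\<Sum>i<n. inv s (c' i) * xs ! i) = 0" using aut_eq0[OF s] by simp
    have z: "\<forall>i<n. inv s (c' i) = 0"
      by (rule mp[OF spec[OF ind, of "\<lambda>i. inv s (c' i)"]]) (use cK sum0 in simp)
    show "\<forall>i<n. c' i = 0"
    proof (intro allI impI)
      fix i assume i: "i < n"
      have e: "inv s (c' i) = 0" using z i by blast
      have "c' i = s (inv s (c' i))" by (rule aut_f_inv[OF s, symmetric])
      also have "\<dots> = 0" unfolding e by (rule aut_0[OF s])
      finally show "c' i = 0" .
    qed
  qed
  have sp': "s ` M = {\<Sum>i<n. c' i * ?ys ! i | c'. \<forall>i<n. c' i \<in> s ` K}"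
  proof
    show "s ` M \<subseteq> {\<Sum>i<n. c' i * ?ys ! i | c'. \<forall>i<n. c' i \<in> s ` K}"
    proof
      fix w assume "w \<in> s ` M"
      then obtain m where "m \<in> M" "w = s m" by blast
      then obtain c where c: "\<forall>i<n. c i \<in> K" "m = (\<Sum>i<n. c i * xs ! i)" using sp by blast
      have "w = (\<Sum>i<n. s (c i * xs ! i))" using \<open>w = s m\<close> c(2) aut_sum[OF s] by simp
      also have "\<dots> = (\<Sum>i<n. s (c i) * s (xs ! i))" by (simp add: aut_mult[OF s])
      also have "\<dots> = (\<Sum>i<n. s (c i) * ?ys ! i)" by (rule sw)
      finally have "w = (\<Sum>i<n. s (c i) * ?ys ! i)" .
      moreover have "\<forall>i<n. s (c i) \<in> s ` K" using c(1) by blast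
      ultimately show "w \<in> {\<Sum>i<n. c' i * ?ys ! i | c'. \<forall>i<n. c' i \<in> s ` K}"
        unfolding mem_Collect_eq by (intro exI[of _ "\<lambda>i. s (c i)"]) simp
    qed
  next
    show "{\<Sum>i<n. c' i * ?ys ! i | c'. \<forall>i<n. c' i \<in> s ` K} \<subseteq> s ` M"
    proof
      fix w assume "w \<in> {\<Sum>i<n. c' i * ?ys ! i | c'. \<forall>i<n. c' i \<in> s ` K}"
      then obtain c' where c': "\<forall>i<n. c' i \<in> s ` K" "w = (\<Sum>i<n. c' i * ?ys ! i)" by blast
      have cK: "\<forall>i<n. inv s (c' i) \<in> K"
      proof (intro allI impI)
        fix i assume "i < n"
        then obtain k where "k \<in> K" "c' i = s k" using c' by blast
        then show "inv s (c' i) \<in> K" using aut_inv_f[OF s] by simp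
      qed
      have "(\<Sum>i<n. inv s (c' i) * xs ! i) \<in> M" unfolding sp mem_Collect_eq
        by (intro exI[of _ "\<lambda>i. inv s (c' i)"]) (simp add: cK)
      moreover have "w = s (\<Sum>i<n. inv s (c' i) * xs ! i)" using key c'(2) by simp
      ultimately show "w \<in> s ` M" by blast
    qed
  qed
  show ?thesis unfolding qc_ext_dim_def by (intro exI[of _ ?ys]) (use ys ind' sp' in simp)
qed

lemma quad_ext_img: "aut s \<Longrightarrow> qc_quad_ext K M \<Longrightarrow> qc_quad_ext (s ` K) (s ` M)"
  unfolding qc_quad_ext_def using img_sf ext_dim_img by blast



lemma mp_coeff: "aut s \<Longrightarrow> coeff (map_poly s p) i = s (coeff p i)"
  by (simp add: coeff_map_poly aut_0)

lemma mp_degree: "aut s \<Longrightarrow> degree (map_poly s p) = degree p"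
  by (rule degree_map_poly) (simp add: aut_eq0)

lemma mp_mult: assumes s: "aut s" shows "map_poly s (p * q) = map_poly s p * map_poly s q"
proof (rule poly_eqI)
  fix n
  have "coeff (map_poly s (p * q)) n = s (\<Sum>i\<le>n. coeff p i * coeff q (n - i))"
    by (simp add: mp_coeff[OF s] coeff_mult)
  also have "\<dots> = (\<Sum>i\<le>n. s (coeff p i) * s (coeff q (n - i)))"
    by (simp add: aut_sum[OF s] aut_mult[OF s])
  also have "\<dots> = coeff (map_poly s p * map_poly s q) n"
    by (simp add: mp_coeff[OF s] coeff_mult)
  finally show "coeff (map_poly s (p * q)) n = coeff (map_poly s p * map_poly s q) n" .
qed

lemma mp_smult: assumes s: "aut s" shows "map_poly s (smult c p) = smult (s c) (map_poly s p)"
  by (rule poly_eqI) (simp add: mp_coeff[OF s] aut_mult[OF s])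

lemma mp_lin: assumes s: "aut s" shows "map_poly s [:- r, 1:] = [:- s r, 1:]"
  by (rule poly_eqI) (simp add: mp_coeff[OF s] coeff_pCons aut_neg[OF s] aut_1[OF s] aut_0[OF s] split: nat.split)

lemma mp_prod_list: assumes s: "aut s"
  shows "map_poly s (\<Prod>r\<leftarrow>rs. [:- r, 1:]) = (\<Prod>r\<leftarrow>rs. [:- s r, 1:])"
proof (induction rs)
  case Nil then show ?case by (simp add: aut_1[OF s])
next
  case (Cons a rs)
  have "map_poly s (\<Prod>r\<leftarrow>a # rs. [:- r, 1:]) = map_poly s ([:- a, 1:] * (\<Prod>r\<leftarrow>rs. [:- r, 1:]))" by simp
  also have "\<dots> = [:- s a, 1:] * (\<Prod>r\<leftarrow>rs. [:- s r, 1:])" by (simp only: mp_mult[OF s] mp_lin[OF s] Cons.IH)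
  finally show ?case by simp
qed

lemma aut_power: "aut s \<Longrightarrow> s (x ^ n) = s x ^ n"
  by (induction n) (simp_all add: aut_1 aut_mult)

lemma mp_poly: assumes s: "aut s" shows "poly (map_poly s p) (s x) = s (poly p x)"
  by (simp add: poly_altdef mp_degree[OF s] mp_coeff[OF s] aut_sum[OF s] aut_mult[OF s] aut_power[OF s])

lemma mp_inv: assumes s: "aut s" shows "map_poly (inv s) (map_poly s p) = p"
  by (rule poly_eqI) (simp add: mp_coeff[OF s] mp_coeff[OF aut_inv[OF s]] aut_inv_f[OF s])

lemma mp_lead: assumes s: "aut s" shows "lead_coeff (map_poly s p) = s (lead_coeff p)"
  by (simp add: mp_coeff[OF s] mp_degree[OF s])

lemma over_img: assumes s: "aut s" and o: "qc_over K p" shows "qc_over (s ` K) (map_poly s p)"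
  using o unfolding qc_over_def by (simp add: mp_coeff[OF s])

lemma over_inv: assumes s: "aut s" and o: "qc_over (s ` K) q" shows "qc_over K (map_poly (inv s) q)"
  unfolding qc_over_def
proof
  fix i
  have "coeff q i \<in> s ` K" using o unfolding qc_over_def by blast
  then obtain k where "k \<in> K" "coeff q i = s k" by blast
  then show "coeff (map_poly (inv s) q) i \<in> K"
    by (simp add: mp_coeff[OF aut_inv[OF s]] aut_inv_f[OF s])
qed

lemma irred_img: assumes s: "aut s" and p: "qc_irreducible_over K p"
  shows "qc_irreducible_over (s ` K) (map_poly s p)"
  unfolding qc_irreducible_over_def
proof (intro conjI allI impI)
  note pp = p[unfolded qc_irreducible_over_def]
  show "qc_over (s ` K) (map_poly s p)" using over_img[OF s pp[THEN conjunct1]] .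
  show "1 \<le> degree (map_poly s p)" using pp[THEN conjunct2, THEN conjunct1] mp_degree[OF s] by simp
next
  fix q r assume h: "qc_over (s ` K) q \<and> qc_over (s ` K) r \<and> map_poly s p = q * r"
  have "p = map_poly (inv s) (map_poly s p)" by (simp add: mp_inv[OF s])
  also have "\<dots> = map_poly (inv s) q * map_poly (inv s) r" using h by (simp add: mp_mult[OF aut_inv[OF s]])
  finally have pe: "p = map_poly (inv s) q * map_poly (inv s) r" .
  have oq: "qc_over K (map_poly (inv s) q)" using over_inv[OF s] h[THEN conjunct1] .
  have or: "qc_over K (map_poly (inv s) r)" using over_inv[OF s] h[THEN conjunct2, THEN conjunct1] .
  have irr: "\<forall>q r. qc_over K q \<and> qc_over K r \<and> p = q * r \<longrightarrow> degree q = 0 \<or> degree r = 0"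
    using p unfolding qc_irreducible_over_def by (elim conjE)
  have "degree (map_poly (inv s) q) = 0 \<or> degree (map_poly (inv s) r) = 0"
    using irr[rule_format, OF conjI[OF oq conjI[OF or pe]]] .
  then show "degree q = 0 \<or> degree r = 0" by (simp add: mp_degree[OF aut_inv[OF s]])
qed

lemma galois_img: assumes s: "aut s" and g: "qc_galois K E"
  shows "qc_galois (s ` K) (s ` E)"
  unfolding qc_galois_def
proof (intro conjI ballI)
  note gg = g[unfolded qc_galois_def]
  show "qc_subfield (s ` K)" using img_sf[OF s gg[THEN conjunct1]] .
  show "qc_subfield (s ` E)" using img_sf[OF s gg[THEN conjunct2, THEN conjunct1]] .
  show "s ` K \<subseteq> s ` E" using gg[THEN conjunct2, THEN conjunct2, THEN conjunct1] by (rule image_mono)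
next
  fix x' assume "x' \<in> s ` E"
  then obtain x where x: "x \<in> E" "x' = s x" by blast
  have gx: "\<exists>p. qc_irreducible_over K p \<and> poly p x = 0 \<and>
        (\<exists>rs. distinct rs \<and> set rs \<subseteq> E \<and> p = smult (lead_coeff p) (\<Prod>r\<leftarrow>rs. [:- r, 1:]))"
    using g[unfolded qc_galois_def, THEN conjunct2, THEN conjunct2, THEN conjunct2] x(1) by (rule bspec)
  obtain p rs where p: "qc_irreducible_over K p" "poly p x = 0" "distinct rs" "set rs \<subseteq> E"
      "p = smult (lead_coeff p) (\<Prod>r\<leftarrow>rs. [:- r, 1:])"
    using gx by (elim exE conjE)
  let ?p = "map_poly s p"
  have A: "qc_irreducible_over (s ` K) ?p" using irred_img[OF s p(1)] .
  have B: "poly ?p x' = 0" unfolding x(2) mp_poly[OF s] p(2) by (rule aut_0[OF s])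
  have C: "distinct (map s rs)" unfolding distinct_map using p(3) inj_on_subset[OF aut_inj[OF s] subset_UNIV] by blast
  have D: "set (map s rs) \<subseteq> s ` E" using p(4) by auto
  have E: "?p = smult (lead_coeff ?p) (\<Prod>r\<leftarrow>map s rs. [:- r, 1:])"
  proof -
    have "?p = map_poly s (smult (lead_coeff p) (\<Prod>r\<leftarrow>rs. [:- r, 1:]))"
      by (rule arg_cong[where f="map_poly s", OF p(5)])
    also have "\<dots> = smult (s (lead_coeff p)) (\<Prod>r\<leftarrow>rs. [:- s r, 1:])"
      by (simp add: mp_smult[OF s] mp_prod_list[OF s])
    also have "\<dots> = smult (lead_coeff ?p) (\<Prod>r\<leftarrow>map s rs. [:- r, 1:])"
      by (simp add: mp_lead[OF s] o_def)
    finally show ?thesis .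
  qed
  show "\<exists>p. qc_irreducible_over (s ` K) p \<and> poly p x' = 0 \<and>
        (\<exists>rs. distinct rs \<and> set rs \<subseteq> s ` E \<and> p = smult (lead_coeff p) (\<Prod>r\<leftarrow>rs. [:- r, 1:]))"
    by (intro exI[of _ ?p] conjI exI[of _ "map s rs"]) (rule A B C D E)+
qed

lemma tower_img: assumes s: "aut s" shows "s ` qc_tower K n = qc_tower (s ` K) n"
proof (induction K n rule: qc_tower.induct)
  case (1 K) then show ?case by simp
next
  case (2 K) then show ?case by simp
next
  case (3 K n)
  let ?T = "qc_tower K (Suc n)"
  let ?T' = "qc_tower (s ` K) (Suc n)"
  let ?MS = "{M. qc_quad_ext ?T M \<and> qc_galois K M}"
  let ?MS' = "{M. qc_quad_ext ?T' M \<and> qc_galois (s ` K) M}"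
  have IH: "s ` ?T = ?T'" using 3 by blast
  have MS: "(\<lambda>M. s ` M) ` ?MS = ?MS'"
  proof
    show "(\<lambda>M. s ` M) ` ?MS \<subseteq> ?MS'"
    proof
      fix M' assume "M' \<in> (\<lambda>M. s ` M) ` ?MS"
      then obtain M where M: "qc_quad_ext ?T M" "qc_galois K M" "M' = s ` M" by blast
      have "qc_quad_ext ?T' M'" using quad_ext_img[OF s M(1)] IH M(3) by simp
      moreover have "qc_galois (s ` K) M'" using galois_img[OF s M(2)] M(3) by simp
      ultimately show "M' \<in> ?MS'" by blast
    qed
  next
    show "?MS' \<subseteq> (\<lambda>M. s ` M) ` ?MS"
    proof
      fix M' assume "M' \<in> ?MS'"
      then have M': "qc_quad_ext ?T' M'" "qc_galois (s ` K) M'" by auto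
      have "qc_quad_ext (inv s ` ?T') (inv s ` M')" using quad_ext_img[OF aut_inv[OF s] M'(1)] .
      then have a: "qc_quad_ext ?T (inv s ` M')" using IH aut_inv_img[OF s] by metis
      have "qc_galois (inv s ` s ` K) (inv s ` M')" using galois_img[OF aut_inv[OF s] M'(2)] .
      then have b: "qc_galois K (inv s ` M')" using aut_inv_img[OF s] by simp
      have "M' = s ` (inv s ` M')" using aut_img_inv[OF s] by simp
      then show "M' \<in> (\<lambda>M. s ` M) ` ?MS" using a b by blast
    qed
  qed
  have "s ` qc_tower K (Suc (Suc n)) = s ` qc_gen_field (?T \<union> \<Union> ?MS)"
    by (simp add: qc_compositum_def)
  also have "\<dots> = qc_gen_field (s ` ?T \<union> \<Union> ((\<lambda>M. s ` M) ` ?MS))"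
    by (simp add: img_gen[OF s] image_Un image_Union)
  also have "\<dots> = qc_gen_field (?T' \<union> \<Union> ?MS')" using IH MS by simp
  also have "\<dots> = qc_tower (s ` K) (Suc (Suc n))" by (simp add: qc_compositum_def)
  finally show ?case .
qed



definition galF :: "'a::field set \<Rightarrow> ('a \<Rightarrow> 'a) \<Rightarrow> bool" where
  "galF F s \<longleftrightarrow> aut s \<and> (\<forall>x\<in>F. s x = x)"

definition orb :: "'a::field set \<Rightarrow> 'a \<Rightarrow> 'a set" where
  "orb F x = {s x | s. galF F s}"

lemma galF_aut: "galF F s \<Longrightarrow> aut s" unfolding galF_def by blast
lemma galF_fix: "galF F s \<Longrightarrow> x \<in> F \<Longrightarrow> s x = x" unfolding galF_def by blast
lemma galF_id: "galF F id" unfolding galF_def using aut_id by simp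
lemma galF_comp: "galF F s \<Longrightarrow> galF F t \<Longrightarrow> galF F (s \<circ> t)"
  unfolding galF_def using aut_comp by auto
lemma galF_inv: assumes "galF F s" shows "galF F (inv s)"
proof -
  have a: "aut s" using assms galF_aut by blast
  have "inv s x = x" if "x \<in> F" for x
    using aut_inv_f[OF a, of x] galF_fix[OF assms that] by simp
  then show ?thesis unfolding galF_def using aut_inv[OF a] by blast
qed
lemma galF_img: assumes "galF F s" shows "s ` F = F"
proof -
  have "s ` F = id ` F" by (rule image_cong) (simp_all add: galF_fix[OF assms])
  then show ?thesis by simp
qed

lemma orb_self: "x \<in> orb F x"
  unfolding orb_def using galF_id by (metis (mono_tags, lifting) id_apply mem_Collect_eq)

lemma orb_mem: "galF F s \<Longrightarrow> s x \<in> orb F x" unfolding orb_def by blast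

lemma orb_img: assumes s: "galF F s" shows "s ` orb F x = orb F x"
proof
  show "s ` orb F x \<subseteq> orb F x"
  proof
    fix w assume "w \<in> s ` orb F x"
    then obtain t where t: "galF F t" "w = s (t x)" unfolding orb_def by blast
    have "w = (s \<circ> t) x" using t by simp
    then show "w \<in> orb F x" using orb_mem[OF galF_comp[OF s t(1)]] by simp
  qed
next
  show "orb F x \<subseteq> s ` orb F x"
  proof
    fix w assume "w \<in> orb F x"
    then obtain t where t: "galF F t" "w = t x" unfolding orb_def by blast
    have "w = s ((inv s \<circ> t) x)" using t aut_f_inv[OF galF_aut[OF s]] by simp
    moreover have "(inv s \<circ> t) x \<in> orb F x" using orb_mem[OF galF_comp[OF galF_inv[OF s] t(1)]] .
    ultimately show "w \<in> s ` orb F x" by blast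
  qed
qed

lemma sqrt_set_finite:
  assumes sq: "\<forall>x::'a::field. \<exists>y. y * y = x"
  shows "finite {t. t * t = (w::'a)}"
proof -
  obtain r where r: "r * r = w" using sq by blast
  have "{t. t * t = w} \<subseteq> {r, - r}" using sq_eq r by auto
  then show ?thesis by (rule finite_subset) simp
qed

lemma orb_finite:
  fixes F :: "'a::field set"
  assumes F: "qc_subfield F" and sq: "\<forall>x::'a. \<exists>y. y * y = x" and qc: "qc_quad_closure F = UNIV"
  shows "finite (orb F x)"
proof -
  let ?O = "{x. finite (orb F x)}"
  have add: "orb F (x + y) \<subseteq> (\<lambda>(a, b). a + b) ` (orb F x \<times> orb F y)" for x y
  proof
    fix w assume "w \<in> orb F (x + y)"
    then obtain t where t: "galF F t" "w = t (x + y)" unfolding orb_def by blast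
    then have "w = t x + t y" using aut_add[OF galF_aut[OF t(1)]] by simp
    moreover have "(t x, t y) \<in> orb F x \<times> orb F y" using orb_mem[OF t(1)] by blast
    ultimately show "w \<in> (\<lambda>(a, b). a + b) ` (orb F x \<times> orb F y)" by force
  qed
  have mul: "orb F (x * y) \<subseteq> (\<lambda>(a, b). a * b) ` (orb F x \<times> orb F y)" for x y
  proof
    fix w assume "w \<in> orb F (x * y)"
    then obtain t where t: "galF F t" "w = t (x * y)" unfolding orb_def by blast
    then have "w = t x * t y" using aut_mult[OF galF_aut[OF t(1)]] by simp
    moreover have "(t x, t y) \<in> orb F x \<times> orb F y" using orb_mem[OF t(1)] by blast
    ultimately show "w \<in> (\<lambda>(a, b). a * b) ` (orb F x \<times> orb F y)" by force
  qed
  have neg: "orb F (- x) \<subseteq> uminus ` orb F x" for x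
  proof
    fix w assume "w \<in> orb F (- x)"
    then obtain t where t: "galF F t" "w = t (- x)" unfolding orb_def by blast
    then have "w = - t x" using aut_neg[OF galF_aut[OF t(1)]] by simp
    then show "w \<in> uminus ` orb F x" using orb_mem[OF t(1)] by blast
  qed
  have inv: "orb F (inverse x) \<subseteq> inverse ` orb F x" for x
  proof
    fix w assume "w \<in> orb F (inverse x)"
    then obtain t where t: "galF F t" "w = t (inverse x)" unfolding orb_def by blast
    then have "w = inverse (t x)" using aut_inverse[OF galF_aut[OF t(1)]] by simp
    then show "w \<in> inverse ` orb F x" using orb_mem[OF t(1)] by blast
  qed
  have sqr: "orb F y \<subseteq> (\<Union>w\<in>orb F (y * y). {t. t * t = w})" for y
  proof
    fix w assume "w \<in> orb F y"
    then obtain t where t: "galF F t" "w = t y" unfolding orb_def by blast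
    then have "w * w = t (y * y)" using aut_mult[OF galF_aut[OF t(1)]] by simp
    then show "w \<in> (\<Union>w\<in>orb F (y * y). {t. t * t = w})" using orb_mem[OF t(1)] by blast
  qed
  have sfO: "qc_subfield ?O"
    unfolding qc_subfield_def
  proof (intro conjI ballI impI)
    have "orb F c = {c}" if "c \<in> F" for c
      unfolding orb_def using galF_fix[OF _ that] galF_id by (auto intro!: exI[of _ id])
    then show "0 \<in> ?O" "1 \<in> ?O" using sf_0[OF F] sf_1[OF F] by auto
  next
    fix x y assume "x \<in> ?O" "y \<in> ?O"
    then have fx: "finite (orb F x)" and fy: "finite (orb F y)" by simp_all
    have "finite (orb F (x + y))" by (rule finite_subset[OF add]) (use fx fy in simp)
    moreover have "finite (orb F (x * y))" by (rule finite_subset[OF mul]) (use fx fy in simp)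
    ultimately show "x + y \<in> ?O" "x * y \<in> ?O" by simp_all
  next
    fix x assume "x \<in> ?O"
    then have fx: "finite (orb F x)" by simp
    have "finite (orb F (- x))" by (rule finite_subset[OF neg]) (use fx in simp)
    moreover have "finite (orb F (inverse x))" by (rule finite_subset[OF inv]) (use fx in simp)
    ultimately show "- x \<in> ?O" "inverse x \<in> ?O" by simp_all
  qed
  have FO: "F \<subseteq> ?O"
  proof
    fix c assume "c \<in> F"
    have "orb F c = {c}"
      unfolding orb_def using galF_fix[OF _ \<open>c \<in> F\<close>] galF_id by (auto intro!: exI[of _ id])
    then show "c \<in> ?O" by simp
  qed
  have clO: "\<forall>x\<in>?O. \<forall>y. y * y = x \<longrightarrow> y \<in> ?O"
  proof (intro ballI allI impI)
    fix x y assume "x \<in> ?O" "y * y = x"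
    have f1: "finite (orb F (y * y))" using \<open>x \<in> ?O\<close> \<open>y * y = x\<close> by simp
    have "finite (\<Union>w\<in>orb F (y * y). {t. t * t = w})"
      by (rule finite_UN_I[OF f1]) (rule sqrt_set_finite[OF sq])
    then have "finite (orb F y)" by (rule finite_subset[OF sqr])
    then show "y \<in> ?O" by simp
  qed
  have "?O = UNIV" using quad_closure_sub[OF qc sfO FO clO] .
  then have "x \<in> ?O" by (rule ssubst) (rule UNIV_I)
  then show ?thesis by simp
qed



lemma tower_sub: "K \<subseteq> qc_tower K n"
proof (induction K n rule: qc_tower.induct)
  case (1 K) then show ?case by simp
next
  case (2 K) then show ?case by simp
next
  case (3 K n)
  have "qc_tower K (Suc n) \<subseteq> qc_tower K (Suc (Suc n))"
    unfolding qc_tower.simps qc_compositum_def using gen_sup by blast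
  then show ?case using 3 by blast
qed

lemma tower_sf: "qc_subfield K \<Longrightarrow> qc_subfield (qc_tower K n)"
proof (induction K n rule: qc_tower.induct)
  case (1 K) then show ?case by simp
next
  case (2 K) then show ?case by simp
next
  case (3 K n) show ?case unfolding qc_tower.simps qc_compositum_def by (rule gen_sf)
qed

lemma sf_Int: "qc_subfield A \<Longrightarrow> qc_subfield B \<Longrightarrow> qc_subfield (A \<inter> B)"
  unfolding qc_subfield_def by auto

lemma L_img:
  assumes g: "galF F t" and F: "qc_subfield F" and a: "a \<in> F" and s: "s * s = a"
  shows "t ` qc_gen_field (insert s F) = qc_gen_field (insert s F)"
proof -
  have at: "aut t" using galF_aut[OF g] .
  have "t ` qc_gen_field (insert s F) = qc_gen_field (insert (t s) F)"
    by (simp add: img_gen[OF at] galF_img[OF g])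
  moreover have "t s = s \<or> t s = - s"
  proof -
    have "t s * t s = t a" using s aut_mult[OF at] by metis
    also have "\<dots> = s * s" using galF_fix[OF g a] s by simp
    finally show ?thesis by (rule sq_eq)
  qed
  moreover have "qc_gen_field (insert (- s) F) = qc_gen_field (insert s F)"
  proof
    have "- s \<in> qc_gen_field (insert s F)" using sf_neg[OF gen_sf] gen_sup by blast
    then have "insert (- s) F \<subseteq> qc_gen_field (insert s F)" using gen_sup by blast
    then show "qc_gen_field (insert (- s) F) \<subseteq> qc_gen_field (insert s F)" by (rule gen_least[OF gen_sf])
    have "- (- s) \<in> qc_gen_field (insert (- s) F)" using sf_neg[OF gen_sf] gen_sup by blast
    moreover have "F \<subseteq> qc_gen_field (insert (- s) F)" using gen_sup[of "insert (- s) F"] by blast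
    ultimately have "insert s F \<subseteq> qc_gen_field (insert (- s) F)" by simp
    then show "qc_gen_field (insert s F) \<subseteq> qc_gen_field (insert (- s) F)" by (rule gen_least[OF gen_sf])
  qed
  ultimately show ?thesis by auto
qed



lemma fixed_in_F:
  fixes F :: "'a::field set"
  assumes F: "qc_subfield F" and two: "(2::'a) \<noteq> 0"
    and sq: "\<forall>x::'a. \<exists>y. y * y = x" and qc: "qc_quad_closure F = UNIV"
    and h: "\<forall>t. galF F t \<longrightarrow> t c = c"
  shows "c \<in> F"
proof (rule ccontr)
  assume "c \<notin> F"
  then obtain t where t: "aut t" "\<forall>x\<in>F. t x = x" "t c \<noteq> c" using fix_lemma[OF F two sq qc] by blast
  have "galF F t" unfolding galF_def using t(1,2) by blast
  then show False using h t(3) by blast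
qed

lemma roots_bound:
  fixes F :: "'a::field set"
  assumes g: "qc_over F g" and g0: "g \<noteq> 0" and gx: "poly g x = 0"
  shows "orb F x \<subseteq> {y. poly g y = 0}"
proof
  fix w assume "w \<in> orb F x"
  then obtain t where t: "galF F t" "w = t x" unfolding orb_def by blast
  have at: "aut t" using galF_aut[OF t(1)] .
  have mg: "map_poly t g = g"
  proof (rule poly_eqI)
    fix i
    have "coeff g i \<in> F" using g unfolding qc_over_def by blast
    then show "coeff (map_poly t g) i = coeff g i" using mp_coeff[OF at] galF_fix[OF t(1)] by simp
  qed
  have "poly g w = poly (map_poly t g) (t x)" using mg t(2) by simp
  also have "\<dots> = t (poly g x)" by (rule mp_poly[OF at])
  also have "\<dots> = 0" using gx aut_0[OF at] by simp
  finally show "w \<in> {y. poly g y = 0}" by simp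
qed

lemma card_orb_le:
  fixes F :: "'a::field set"
  assumes g: "qc_over F g" and g0: "g \<noteq> 0" and gx: "poly g x = 0"
  shows "card (orb F x) \<le> degree g"
proof -
  have "card (orb F x) \<le> card {y. poly g y = 0}"
    by (rule card_mono[OF poly_roots_finite[OF g0] roots_bound[OF g g0 gx]])
  also have "\<dots> \<le> degree g" by (rule card_poly_roots_bound[OF g0])
  finally show ?thesis .
qed

theorem lemma4:
  fixes F :: "'a::field set" and a s :: 'a
  assumes "qc_subfield F"
    and "(2::'a) \<noteq> 0"
    and "\<forall>x::'a. \<exists>y. y * y = x"
    and "qc_quad_closure F = UNIV"
    and "a \<in> F" and "a \<noteq> 0" and "\<not> (\<exists>b\<in>F. b * b = a)"
    and "s * s = a"
  shows "qc_galois F (qc_tower F 4 \<inter> qc_tower (qc_gen_field (insert s F)) 3)"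
proof -
  note F = assms(1) and two = assms(2) and sq = assms(3) and qc = assms(4)
    and aF = assms(5) and sa = assms(8)
  define L where "L = qc_gen_field (insert s F)"
  define E where "E = qc_tower F 4 \<inter> qc_tower L 3"
  have sfL: "qc_subfield L" unfolding L_def by (rule gen_sf)
  have FL: "F \<subseteq> L" unfolding L_def using gen_sup by blast
  have sfE: "qc_subfield E" unfolding E_def by (rule sf_Int[OF tower_sf[OF F] tower_sf[OF sfL]])
  have FE: "F \<subseteq> E" unfolding E_def using tower_sub[of F 4] tower_sub[of L 3] FL by blast
  have stab: "t ` E \<subseteq> E" if t: "galF F t" for t
  proof -
    have at: "aut t" using galF_aut[OF t] .
    have "t ` qc_tower F 4 = qc_tower F 4" using tower_img[OF at, of F 4] galF_img[OF t] by simp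
    moreover have "t ` qc_tower L 3 = qc_tower L 3"
      using tower_img[OF at, of L 3] L_img[OF t F aF sa] unfolding L_def by simp
    ultimately show ?thesis unfolding E_def by blast
  qed
  have main: "\<exists>p. qc_irreducible_over F p \<and> poly p x = 0 \<and>
        (\<exists>rs. distinct rs \<and> set rs \<subseteq> E \<and> p = smult (lead_coeff p) (\<Prod>r\<leftarrow>rs. [:- r, 1:]))"
    if xE: "x \<in> E" for x
  proof -
    let ?O = "orb F x"
    have finO: "finite ?O" by (rule orb_finite[OF F sq qc])
    obtain rs where rs: "distinct rs" "set rs = ?O" using finite_distinct_list[OF finO] by blast
    define q where "q = (\<Prod>r\<leftarrow>rs. [:- r, 1:])"
    have qset: "q = (\<Prod>r\<in>?O. [:- r, 1:])"
      unfolding q_def using prod.distinct_set_conv_list[OF rs(1), of "\<lambda>r. [:- r, 1:]"] rs(2) by simp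
    have q0: "q \<noteq> 0" unfolding qset using finO by simp
    have degq: "degree q = card ?O"
    proof -
      have "degree q = (\<Sum>r\<in>?O. degree [:- r, 1:])" unfolding qset
        by (rule degree_prod_eq_sum_degree) simp
      then show ?thesis by simp
    qed
    have lq: "lead_coeff q = 1" unfolding qset lead_coeff_prod by simp
    have qx: "poly q x = 0"
    proof -
      have "poly q x = (\<Prod>r\<in>?O. poly [:- r, 1:] x)" unfolding qset by (rule poly_prod)
      also have "\<dots> = 0" by (rule prod_zero[OF finO], rule bexI[of _ x]) (simp_all add: orb_self)
      finally show ?thesis .
    qed
    have qfix: "map_poly t q = q" if t: "galF F t" for t
    proof -
      have at: "aut t" using galF_aut[OF t] .
      have "map_poly t q = (\<Prod>r\<leftarrow>rs. [:- t r, 1:])" unfolding q_def by (rule mp_prod_list[OF at])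
      also have "\<dots> = (\<Prod>r\<in>?O. [:- t r, 1:])"
        using prod.distinct_set_conv_list[OF rs(1), of "\<lambda>r. [:- t r, 1:]"] rs(2) by simp
      also have "\<dots> = (\<Prod>r\<in>t ` ?O. [:- r, 1:])"
        using prod.reindex[OF inj_on_subset[OF aut_inj[OF at] subset_UNIV], of "\<lambda>r. [:- r, 1:]" ?O]
        by (simp add: o_def)
      also have "\<dots> = q" unfolding qset orb_img[OF t] ..
      finally show ?thesis .
    qed
    have overq: "qc_over F q"
      unfolding qc_over_def
    proof
      fix i
      show "coeff q i \<in> F"
      proof (rule fixed_in_F[OF F two sq qc], intro allI impI)
        fix t assume t: "galF F t"
        have "t (coeff q i) = coeff (map_poly t q) i" using mp_coeff[OF galF_aut[OF t]] by simp
        then show "t (coeff q i) = coeff q i" using qfix[OF t] by simp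
      qed
    qed
    have irr: "qc_irreducible_over F q"
      unfolding qc_irreducible_over_def
    proof (intro conjI allI impI)
      show "qc_over F q" by (rule overq)
      have "card ?O \<noteq> 0" using finO orb_self[of x F] by auto
      then show "1 \<le> degree q" using degq by simp
    next
      fix g h assume gh: "qc_over F g \<and> qc_over F h \<and> q = g * h"
      have g0: "g \<noteq> 0" and h0: "h \<noteq> 0" using q0 gh by auto
      have dq: "degree q = degree g + degree h" using gh degree_mult_eq[OF g0 h0] by simp
      have "poly g x * poly h x = 0" using qx gh by simp
      then have "poly g x = 0 \<or> poly h x = 0" by simp
      then show "degree g = 0 \<or> degree h = 0"
      proof
        assume "poly g x = 0"
        then have "card ?O \<le> degree g" using card_orb_le gh g0 by blast
        then show ?thesis using dq degq by simp
      next
        assume "poly h x = 0"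
        then have "card ?O \<le> degree h" using card_orb_le gh h0 by blast
        then show ?thesis using dq degq by simp
      qed
    qed
    have OE: "set rs \<subseteq> E"
    proof
      fix w assume "w \<in> set rs"
      then obtain t where t: "galF F t" "w = t x" using rs(2) unfolding orb_def by blast
      then show "w \<in> E" using stab[OF t(1)] xE by blast
    qed
    have qs: "q = smult (lead_coeff q) (\<Prod>r\<leftarrow>rs. [:- r, 1:])" using lq unfolding q_def by simp
    show ?thesis
      by (intro exI[of _ q] conjI exI[of _ rs]) (rule irr qx rs(1) OE qs)+
  qed
  have "qc_galois F E" unfolding qc_galois_def using F sfE FE main by blast
  then show ?thesis unfolding E_def L_def by simp
qed

end
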